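(* Let $\mathcal{R}=(W,\unlhd)$ be a poset regarded as a category (with an arrow $w\to v$ iff $w\unlhd v$), and let $\mathbf{Set}^{\mathcal{R}}$ be the topos of covariant presheaves on $\mathcal{R}$. Then $\mathbf{Set}^{\mathcal{R}}$ is scattered if and only if there is no infinite strictly ascending chain $w_0\lhd w_1\lhd w_2\lhd\cdots$ in $W$ (equivalently, the Alexandroff topology on $W$ whose opens are the $\unlhd$-upward closed sets is scattered), where $\lhd$ is the strict part of $\unlhd$.
   Context: An elementary topos with subobject classifier $\Omega$ is scattered if, in its Mitchell–Bénabou internal language, $\forall p{:}\Omega.((\divideontimes p\Rightarrow p)\Rightarrow p)$ is valid, where $\divideontimes p:=\forall t{:}\Omega.(t\vee(t\Rightarrow p))$. A topological space is scattered if each nonempty subset has an isolated point. *)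

theory Defs
  imports Main
begin

definition poset_on :: "'a set \<Rightarrow> ('a \<Rightarrow> 'a \<Rightarrow> bool) \<Rightarrow> bool" where
  "poset_on W le \<longleftrightarrow>
     (\<forall>x\<in>W. le x x) \<and>
     (\<forall>x\<in>W. \<forall>y\<in>W. le x y \<and> le y x \<longrightarrow> x = y) \<and>
     (\<forall>x\<in>W. \<forall>y\<in>W. \<forall>z\<in>W. le x y \<and> le y z \<longrightarrow> le x z)"

definition up :: "'a set \<Rightarrow> ('a \<Rightarrow> 'a \<Rightarrow> bool) \<Rightarrow> 'a \<Rightarrow> 'a set" where
  "up W le w = {v\<in>W. le w v}"

text \<open>The subobject classifier Omega of the covariant presheaf topos Set^R:
  Omega(w) is the set of cosieves on w, i.e. up-closed subsets of the up-set of w.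
  Restriction along w <= v is intersection with up v.\<close>
definition Omega :: "'a set \<Rightarrow> ('a \<Rightarrow> 'a \<Rightarrow> bool) \<Rightarrow> 'a \<Rightarrow> 'a set set" where
  "Omega W le w = {S. S \<subseteq> up W le w \<and> (\<forall>x\<in>S. \<forall>y\<in>W. le x y \<longrightarrow> y \<in> S)}"

text \<open>Formulas of the Mitchell-Benabou language built from variables of type Omega
  (variables are named by natural numbers), with quantification over Omega.\<close>
datatype form =
    Var nat
  | Top
  | Bot
  | Conj form form
  | Disj form form
  | Imp form form
  | AllO nat form

text \<open>Kripke-Joyal forcing in the presheaf topos Set^R; an environment assigns to
  each variable an element of Omega at the current stage.  A variable p (a generalized
  element of Omega at stage w) is forced at w iff it equals the top cosieve, i.e. w \<in> p.\<close>
fun forces :: "'a set \<Rightarrow> ('a \<Rightarrow> 'a \<Rightarrow> bool) \<Rightarrow> 'a \<Rightarrow> (nat \<Rightarrow> 'a set) \<Rightarrow> form \<Rightarrow> bool" where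
  "forces W le w \<rho> (Var x) = (w \<in> \<rho> x)"
| "forces W le w \<rho> Top = True"
| "forces W le w \<rho> Bot = False"
| "forces W le w \<rho> (Conj \<phi> \<psi>) = (forces W le w \<rho> \<phi> \<and> forces W le w \<rho> \<psi>)"
| "forces W le w \<rho> (Disj \<phi> \<psi>) = (forces W le w \<rho> \<phi> \<or> forces W le w \<rho> \<psi>)"
| "forces W le w \<rho> (Imp \<phi> \<psi>) =
     (\<forall>v\<in>W. le w v \<longrightarrow>
        forces W le v (\<lambda>x. \<rho> x \<inter> up W le v) \<phi> \<longrightarrow>
        forces W le v (\<lambda>x. \<rho> x \<inter> up W le v) \<psi>)"
| "forces W le w \<rho> (AllO n \<phi>) =
     (\<forall>v\<in>W. le w v \<longrightarrow> (\<forall>S\<in>Omega W le v.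
        forces W le v ((\<lambda>x. \<rho> x \<inter> up W le v)(n := S)) \<phi>))"

definition valid :: "'a set \<Rightarrow> ('a \<Rightarrow> 'a \<Rightarrow> bool) \<Rightarrow> form \<Rightarrow> bool" where
  "valid W le \<phi> \<longleftrightarrow>
     (\<forall>w\<in>W. \<forall>\<rho>. (\<forall>x. \<rho> x \<in> Omega W le w) \<longrightarrow> forces W le w \<rho> \<phi>)"

text \<open>star p := forall t:Omega. (t \<or> (t \<Rightarrow> p)); here p is variable 0, t is variable 1.\<close>
definition star0 :: form where
  "star0 = AllO 1 (Disj (Var 1) (Imp (Var 1) (Var 0)))"

definition scattered_axiom :: form where
  "scattered_axiom = AllO 0 (Imp (Imp star0 (Var 0)) (Var 0))"

definition presheaf_topos_scattered :: "'a set \<Rightarrow> ('a \<Rightarrow> 'a \<Rightarrow> bool) \<Rightarrow> bool" where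
  "presheaf_topos_scattered W le \<longleftrightarrow> valid W le scattered_axiom"

end

theory Submission
  imports Defs
begin

lemma po_refl: "poset_on W le \<Longrightarrow> x \<in> W \<Longrightarrow> le x x"
  unfolding poset_on_def by blast
lemma po_antisym: "poset_on W le \<Longrightarrow> x \<in> W \<Longrightarrow> y \<in> W \<Longrightarrow> le x y \<Longrightarrow> le y x \<Longrightarrow> x = y"
  unfolding poset_on_def by blast
lemma po_trans: "poset_on W le \<Longrightarrow> x \<in> W \<Longrightarrow> y \<in> W \<Longrightarrow> z \<in> W \<Longrightarrow> le x y \<Longrightarrow> le y z \<Longrightarrow> le x z"
  unfolding poset_on_def by blast

lemma star_char:
  assumes po: "poset_on W le" and u: "u \<in> W"
    and uc: "\<forall>x\<in>\<sigma> 0. \<forall>y\<in>W. le x y \<longrightarrow> y \<in> \<sigma> 0"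
  shows "forces W le u \<sigma> star0 \<longleftrightarrow> (\<forall>t\<in>W. le u t \<and> t \<noteq> u \<longrightarrow> t \<in> \<sigma> 0)"
proof
  assume h: "forces W le u \<sigma> star0"
  define S where "S = {t\<in>W. le u t \<and> t \<noteq> u}"
  have "S \<in> Omega W le u"
    using po u unfolding S_def Omega_def up_def poset_on_def by blast
  moreover have "u \<notin> S" unfolding S_def by simp
  moreover have "u \<in> W" "le u u" using u po unfolding poset_on_def by auto
  ultimately have "\<forall>v'\<in>W. le u v' \<longrightarrow> v' \<in> S \<and> v' \<in> up W le v' \<longrightarrow> v' \<in> \<sigma> 0 \<and> v' \<in> up W le u \<and> v' \<in> up W le v'"
    using h unfolding star0_def by (simp; blast)
  then show "\<forall>t\<in>W. le u t \<and> t \<noteq> u \<longrightarrow> t \<in> \<sigma> 0" unfolding S_def up_def using po unfolding poset_on_def by blast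
next
  assume h: "\<forall>t\<in>W. le u t \<and> t \<noteq> u \<longrightarrow> t \<in> \<sigma> 0"
  have X: "\<forall>v\<in>W. le u v \<longrightarrow> (\<forall>S\<in>Omega W le v. v \<in> S \<or> (\<forall>v'\<in>W. le v v' \<longrightarrow> v' \<in> S \<longrightarrow> v' \<in> \<sigma> 0 \<and> v' \<in> up W le v))"
  proof (intro ballI impI)
    fix v S assume v: "v \<in> W" "le u v" and S: "S \<in> Omega W le v"
    show "v \<in> S \<or> (\<forall>v'\<in>W. le v v' \<longrightarrow> v' \<in> S \<longrightarrow> v' \<in> \<sigma> 0 \<and> v' \<in> up W le v)"
    proof (cases "v \<in> S")
      case False
      have "v' \<in> \<sigma> 0 \<and> v' \<in> up W le v"
        if "v' \<in> W" "le v v'" "v' \<in> S" for v'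
      proof -
        have "v' \<noteq> v" using False that by auto
        hence "v' \<noteq> u" using po v that u unfolding poset_on_def by blast
        moreover have "le u v'" using po v that u unfolding poset_on_def by blast
        ultimately have "v' \<in> \<sigma> 0" using h that by blast
        thus ?thesis using that unfolding up_def by auto
      qed
      thus ?thesis by blast
    qed simp
  qed
  show "forces W le u \<sigma> star0"
    unfolding star0_def using X by (simp; blast)
qed


lemma imp_char:
  assumes po: "poset_on W le" and u: "u \<in> W"
    and uc: "\<forall>x\<in>\<sigma> 0. \<forall>y\<in>W. le x y \<longrightarrow> y \<in> \<sigma> 0"
  shows "forces W le u \<sigma> (Imp star0 (Var 0)) \<longleftrightarrow>
    (\<forall>u'\<in>W. le u u' \<longrightarrow> (\<forall>t\<in>W. le u' t \<and> t \<noteq> u' \<longrightarrow> t \<in> \<sigma> 0) \<longrightarrow> u' \<in> \<sigma> 0)"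
proof -
  have E1: "forces W le u' (\<lambda>x. \<sigma> x \<inter> up W le u') star0 \<longleftrightarrow> (\<forall>t\<in>W. le u' t \<and> t \<noteq> u' \<longrightarrow> t \<in> \<sigma> 0)"
    if "u' \<in> W" for u'
  proof -
    have uc': "\<forall>x\<in>(\<lambda>x. \<sigma> x \<inter> up W le u') 0. \<forall>y\<in>W. le x y \<longrightarrow> y \<in> (\<lambda>x. \<sigma> x \<inter> up W le u') 0"
    proof (intro ballI impI)
      fix x y assume x: "x \<in> (\<lambda>x. \<sigma> x \<inter> up W le u') 0" and y: "y \<in> W" "le x y"
      hence x': "x \<in> \<sigma> 0" "x \<in> W" "le u' x" by (auto simp: up_def)
      have "y \<in> \<sigma> 0" using uc x' y by blast
      moreover have "le u' y" using po_trans[OF po that x'(2) y(1) x'(3) y(2)] .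
      ultimately show "y \<in> (\<lambda>x. \<sigma> x \<inter> up W le u') 0" using y by (simp add: up_def)
    qed
    have "forces W le u' (\<lambda>x. \<sigma> x \<inter> up W le u') star0 \<longleftrightarrow> (\<forall>t\<in>W. le u' t \<and> t \<noteq> u' \<longrightarrow> t \<in> \<sigma> 0 \<inter> up W le u')"
      by (rule star_char[where \<sigma>="\<lambda>x. \<sigma> x \<inter> up W le u'", OF po that uc'])
    moreover have "(\<forall>t\<in>W. le u' t \<and> t \<noteq> u' \<longrightarrow> t \<in> \<sigma> 0 \<inter> up W le u') \<longleftrightarrow> (\<forall>t\<in>W. le u' t \<and> t \<noteq> u' \<longrightarrow> t \<in> \<sigma> 0)"
      unfolding up_def by blast
    ultimately show ?thesis by (rule trans)
  qed
  have E2: "u' \<in> up W le u'" if "u' \<in> W" for u'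
    using po_refl[OF po that] that unfolding up_def by auto
  have E3: "forces W le u \<sigma> (Imp star0 (Var 0)) \<longleftrightarrow> (\<forall>u'\<in>W. le u u' \<longrightarrow> forces W le u' (\<lambda>x. \<sigma> x \<inter> up W le u') star0 \<longrightarrow> u' \<in> \<sigma> 0 \<inter> up W le u')"
    by (simp only: forces.simps(6) forces.simps(1))
  show ?thesis unfolding E3
  proof (intro iffI ballI impI)
    fix u' assume H: "\<forall>u'\<in>W. le u u' \<longrightarrow> forces W le u' (\<lambda>x. \<sigma> x \<inter> up W le u') star0 \<longrightarrow> u' \<in> \<sigma> 0 \<inter> up W le u'"
      and u': "u' \<in> W" "le u u'" and Q: "\<forall>t\<in>W. le u' t \<and> t \<noteq> u' \<longrightarrow> t \<in> \<sigma> 0"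
    have "forces W le u' (\<lambda>x. \<sigma> x \<inter> up W le u') star0" using E1[OF u'(1)] Q by simp
    then show "u' \<in> \<sigma> 0" using H u' by blast
  next
    fix u' assume H: "\<forall>u'\<in>W. le u u' \<longrightarrow> (\<forall>t\<in>W. le u' t \<and> t \<noteq> u' \<longrightarrow> t \<in> \<sigma> 0) \<longrightarrow> u' \<in> \<sigma> 0"
      and u': "u' \<in> W" "le u u'" and S: "forces W le u' (\<lambda>x. \<sigma> x \<inter> up W le u') star0"
    have "\<forall>t\<in>W. le u' t \<and> t \<noteq> u' \<longrightarrow> t \<in> \<sigma> 0" using E1[OF u'(1)] S by simp
    then have "u' \<in> \<sigma> 0" using H u' by blast
    then show "u' \<in> \<sigma> 0 \<inter> up W le u'" using E2[OF u'(1)] by blast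
  qed
qed

lemma ax_key:
  assumes po: "poset_on W le" and v: "v \<in> W" and P: "P \<in> Omega W le v"
    and u: "u \<in> W" "le v u"
  shows "forces W le u (\<lambda>x. ((\<lambda>x. \<rho> x \<inter> up W le v)(0 := P)) x \<inter> up W le u) (Imp star0 (Var 0))
     \<longleftrightarrow> (\<forall>u'\<in>W. le u u' \<longrightarrow> (\<forall>t\<in>W. le u' t \<and> t \<noteq> u' \<longrightarrow> t \<in> P) \<longrightarrow> u' \<in> P)"
proof -
  let ?\<sigma> = "\<lambda>x. ((\<lambda>x. \<rho> x \<inter> up W le v)(0 := P)) x \<inter> up W le u"
  have Pc: "\<forall>x\<in>P. \<forall>y\<in>W. le x y \<longrightarrow> y \<in> P" using P unfolding Omega_def by blast
  have s0: "?\<sigma> 0 = P \<inter> up W le u" by simp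
  have uc: "\<forall>x\<in>?\<sigma> 0. \<forall>y\<in>W. le x y \<longrightarrow> y \<in> ?\<sigma> 0"
    unfolding s0
  proof (intro ballI impI)
    fix x y assume x: "x \<in> P \<inter> up W le u" and y: "y \<in> W" "le x y"
    hence x': "x \<in> P" "x \<in> W" "le u x" by (auto simp: up_def)
    have "y \<in> P" using Pc x' y by blast
    moreover have "le u y" using po_trans[OF po u(1) x'(2) y(1) x'(3) y(2)] .
    ultimately show "y \<in> P \<inter> up W le u" using y by (simp add: up_def)
  qed
  have I: "forces W le u ?\<sigma> (Imp star0 (Var 0)) \<longleftrightarrow>
    (\<forall>u'\<in>W. le u u' \<longrightarrow> (\<forall>t\<in>W. le u' t \<and> t \<noteq> u' \<longrightarrow> t \<in> ?\<sigma> 0) \<longrightarrow> u' \<in> ?\<sigma> 0)"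
    by (rule imp_char[where \<sigma>="?\<sigma>", OF po u(1) uc])
  have upu: "\<And>t. t \<in> W \<Longrightarrow> le u t \<Longrightarrow> t \<in> up W le u" unfolding up_def by simp
  have tr: "\<And>u' t. u' \<in> W \<Longrightarrow> t \<in> W \<Longrightarrow> le u u' \<Longrightarrow> le u' t \<Longrightarrow> le u t"
    using po_trans[OF po u(1)] by blast
  show ?thesis unfolding I s0
  proof (intro iffI ballI impI)
    fix u' assume H: "\<forall>u'\<in>W. le u u' \<longrightarrow> (\<forall>t\<in>W. le u' t \<and> t \<noteq> u' \<longrightarrow> t \<in> P \<inter> up W le u) \<longrightarrow> u' \<in> P \<inter> up W le u"
      and u': "u' \<in> W" "le u u'" and Q: "\<forall>t\<in>W. le u' t \<and> t \<noteq> u' \<longrightarrow> t \<in> P"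
    have "\<forall>t\<in>W. le u' t \<and> t \<noteq> u' \<longrightarrow> t \<in> P \<inter> up W le u"
      using Q upu tr u' by blast
    then show "u' \<in> P" using H u' by blast
  next
    fix u' assume H: "\<forall>u'\<in>W. le u u' \<longrightarrow> (\<forall>t\<in>W. le u' t \<and> t \<noteq> u' \<longrightarrow> t \<in> P) \<longrightarrow> u' \<in> P"
      and u': "u' \<in> W" "le u u'" and Q: "\<forall>t\<in>W. le u' t \<and> t \<noteq> u' \<longrightarrow> t \<in> P \<inter> up W le u"
    have "u' \<in> P" using H u' Q by blast
    then show "u' \<in> P \<inter> up W le u" using upu u' by blast
  qed
qed

lemma ax_char:
  assumes po: "poset_on W le" and w: "w \<in> W"
  shows "forces W le w \<rho> scattered_axiom \<longleftrightarrow>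
    (\<forall>v\<in>W. le w v \<longrightarrow> (\<forall>P\<in>Omega W le v. \<forall>u\<in>W. le v u \<longrightarrow>
       (\<forall>u'\<in>W. le u u' \<longrightarrow> (\<forall>t\<in>W. le u' t \<and> t \<noteq> u' \<longrightarrow> t \<in> P) \<longrightarrow> u' \<in> P) \<longrightarrow> u \<in> P))"
proof -
  have refl: "u \<in> up W le u" if "u \<in> W" for u
    using po_refl[OF po that] that unfolding up_def by auto
  have A: "forces W le w \<rho> scattered_axiom \<longleftrightarrow>
    (\<forall>v\<in>W. le w v \<longrightarrow> (\<forall>P\<in>Omega W le v. \<forall>u\<in>W. le v u \<longrightarrow>
      forces W le u (\<lambda>x. ((\<lambda>x. \<rho> x \<inter> up W le v)(0 := P)) x \<inter> up W le u) (Imp star0 (Var 0)) \<longrightarrow>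
      u \<in> P \<inter> up W le u))"
    unfolding scattered_axiom_def
    by (simp only: forces.simps(7) forces.simps(6)[of _ _ _ _ "Imp star0 (Var 0)"] forces.simps(1) fun_upd_same)
  show ?thesis unfolding A
  proof (intro iffI ballI impI)
    fix v P u
    assume H: "\<forall>v\<in>W. le w v \<longrightarrow> (\<forall>P\<in>Omega W le v. \<forall>u\<in>W. le v u \<longrightarrow>
      forces W le u (\<lambda>x. ((\<lambda>x. \<rho> x \<inter> up W le v)(0 := P)) x \<inter> up W le u) (Imp star0 (Var 0)) \<longrightarrow>
      u \<in> P \<inter> up W le u)"
      and v: "v \<in> W" "le w v" and P: "P \<in> Omega W le v" and u: "u \<in> W" "le v u"
      and I: "\<forall>u'\<in>W. le u u' \<longrightarrow> (\<forall>t\<in>W. le u' t \<and> t \<noteq> u' \<longrightarrow> t \<in> P) \<longrightarrow> u' \<in> P"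
    have "forces W le u (\<lambda>x. ((\<lambda>x. \<rho> x \<inter> up W le v)(0 := P)) x \<inter> up W le u) (Imp star0 (Var 0))"
      using ax_key[OF po v(1) P u, of \<rho>] I by blast
    then show "u \<in> P" using H v P u by blast
  next
    fix v P u
    assume H: "\<forall>v\<in>W. le w v \<longrightarrow> (\<forall>P\<in>Omega W le v. \<forall>u\<in>W. le v u \<longrightarrow>
       (\<forall>u'\<in>W. le u u' \<longrightarrow> (\<forall>t\<in>W. le u' t \<and> t \<noteq> u' \<longrightarrow> t \<in> P) \<longrightarrow> u' \<in> P) \<longrightarrow> u \<in> P)"
      and v: "v \<in> W" "le w v" and P: "P \<in> Omega W le v" and u: "u \<in> W" "le v u"
      and F: "forces W le u (\<lambda>x. ((\<lambda>x. \<rho> x \<inter> up W le v)(0 := P)) x \<inter> up W le u) (Imp star0 (Var 0))"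
    have "u \<in> P" using ax_key[OF po v(1) P u, of \<rho>] F H v P u by blast
    then show "u \<in> P \<inter> up W le u" using refl u by blast
  qed
qed


theorem theorem5p13:
  fixes W :: "'a set" and le :: "'a \<Rightarrow> 'a \<Rightarrow> bool"
  assumes "poset_on W le"
  shows "presheaf_topos_scattered W le \<longleftrightarrow>
    \<not> (\<exists>f :: nat \<Rightarrow> 'a. \<forall>n. f n \<in> W \<and> le (f n) (f (Suc n)) \<and> f n \<noteq> f (Suc n))"
proof
  note po = assms
  assume V: "presheaf_topos_scattered W le"
  show "\<not> (\<exists>f :: nat \<Rightarrow> 'a. \<forall>n. f n \<in> W \<and> le (f n) (f (Suc n)) \<and> f n \<noteq> f (Suc n))"
  proof
    assume "\<exists>f :: nat \<Rightarrow> 'a. \<forall>n. f n \<in> W \<and> le (f n) (f (Suc n)) \<and> f n \<noteq> f (Suc n)"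
    then obtain f :: "nat \<Rightarrow> 'a" where f: "\<And>n. f n \<in> W" "\<And>n. le (f n) (f (Suc n))" "\<And>n. f n \<noteq> f (Suc n)"
      by blast
    define w where "w = f 0"
    have w: "w \<in> W" using f unfolding w_def by blast
    have upO: "up W le w \<in> Omega W le w"
      unfolding Omega_def up_def using po_trans[OF po w] by blast
    have "\<forall>\<rho>. (\<forall>x. \<rho> x \<in> Omega W le w) \<longrightarrow> forces W le w \<rho> scattered_axiom"
      using V w unfolding presheaf_topos_scattered_def valid_def by blast
    from spec[OF this, where x="\<lambda>_. up W le w"]
    have F: "forces W le w (\<lambda>_. up W le w) scattered_axiom" using upO by simp
    define P where "P = {x\<in>W. le w x \<and> (\<forall>n. \<not> le x (f n))}"
    have PO: "P \<in> Omega W le w"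
    proof -
      have "P \<subseteq> up W le w" unfolding P_def up_def by blast
      moreover have "\<forall>x\<in>P. \<forall>y\<in>W. le x y \<longrightarrow> y \<in> P"
      proof (intro ballI impI)
        fix x y assume x: "x \<in> P" and y: "y \<in> W" "le x y"
        have "le w y" using po_trans[OF po w _ y(1) _ y(2)] x unfolding P_def by blast
        moreover have "\<not> le y (f n)" for n
        proof
          assume "le y (f n)"
          hence "le x (f n)" using po_trans[OF po _ y(1) f(1) y(2)] x unfolding P_def by blast
          thus False using x unfolding P_def by blast
        qed
        ultimately show "y \<in> P" using y unfolding P_def by blast
      qed
      ultimately show ?thesis unfolding Omega_def by blast
    qed
    have ind: "\<forall>u'\<in>W. le w u' \<longrightarrow> (\<forall>t\<in>W. le u' t \<and> t \<noteq> u' \<longrightarrow> t \<in> P) \<longrightarrow> u' \<in> P"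
    proof (intro ballI impI)
      fix u' assume u': "u' \<in> W" "le w u'" and H: "\<forall>t\<in>W. le u' t \<and> t \<noteq> u' \<longrightarrow> t \<in> P"
      show "u' \<in> P"
      proof (rule ccontr)
        assume "u' \<notin> P"
        then obtain n where n: "le u' (f n)" using u' unfolding P_def by blast
        have le1: "le u' (f (Suc n))" using po_trans[OF po u'(1) f(1) f(1) n f(2)] .
        have ne: "f (Suc n) \<noteq> u'"
        proof
          assume e: "f (Suc n) = u'"
          have "f n = f (Suc n)"
            using po_antisym[OF po f(1) f(1) f(2), of n] n e by simp
          thus False using f(3) by simp
        qed
        have "f (Suc n) \<in> P" using H f(1) le1 ne by blast
        moreover have "le (f (Suc n)) (f (Suc n))" using po_refl[OF po f(1)] .
        ultimately show False unfolding P_def by blast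
      qed
    qed
    have "w \<in> P"
      using F[unfolded ax_char[OF po w]] w po_refl[OF po w] PO ind by blast
    moreover have "le w (f 0)" using po_refl[OF po w] unfolding w_def by simp
    ultimately show False unfolding P_def by blast
  qed
next
  note po = assms
  assume NC: "\<not> (\<exists>f :: nat \<Rightarrow> 'a. \<forall>n. f n \<in> W \<and> le (f n) (f (Suc n)) \<and> f n \<noteq> f (Suc n))"
  define r where "r = {(y, x). x \<in> W \<and> y \<in> W \<and> le x y \<and> x \<noteq> y}"
  have wfr: "wf r"
    unfolding wf_iff_no_infinite_down_chain
  proof
    assume "\<exists>f. \<forall>i. (f (Suc i), f i) \<in> r"
    then obtain f where "\<forall>i. (f (Suc i), f i) \<in> r" by blast
    hence "\<forall>n. f n \<in> W \<and> le (f n) (f (Suc n)) \<and> f n \<noteq> f (Suc n)" unfolding r_def by blast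
    thus False using NC by blast
  qed
  show "presheaf_topos_scattered W le"
    unfolding presheaf_topos_scattered_def valid_def
  proof (intro ballI allI impI)
    fix w \<rho> assume w: "w \<in> W"
    show "forces W le w \<rho> scattered_axiom"
      unfolding ax_char[OF po w]
    proof (intro ballI impI)
      fix v P u assume v: "v \<in> W" "le w v" and P: "P \<in> Omega W le v" and u: "u \<in> W" "le v u"
        and I: "\<forall>u'\<in>W. le u u' \<longrightarrow> (\<forall>t\<in>W. le u' t \<and> t \<noteq> u' \<longrightarrow> t \<in> P) \<longrightarrow> u' \<in> P"
      have "x \<in> W \<longrightarrow> le u x \<longrightarrow> x \<in> P" for x
        using wfr
      proof (induction x rule: wf_induct_rule)
        case (less x)
        show ?case
        proof (intro impI)
          assume x: "x \<in> W" "le u x"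
          have "\<forall>t\<in>W. le x t \<and> t \<noteq> x \<longrightarrow> t \<in> P"
          proof (intro ballI impI)
            fix t assume t: "t \<in> W" "le x t \<and> t \<noteq> x"
            have "(t, x) \<in> r" unfolding r_def using t x by auto
            moreover have "le u t" using po_trans[OF po u(1) x(1) t(1) x(2)] t by blast
            ultimately show "t \<in> P" using less t by blast
          qed
          thus "x \<in> P" using I x by blast
        qed
      qed
      thus "u \<in> P" using u po_refl[OF po u(1)] by blast
    qed
  qed
qed

end
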